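(* Let $N_0\in\mathbb{N}$. Let $E=E(a_1,\dots,a_n)$ and $E'=E(b_1,\dots,b_n)$ be bounded ellipsoids in $\mathbb{R}^{2n}$ ($0<a_1\le\dots\le a_n<\infty$, $0<b_1\le\dots\le b_n<\infty$). Suppose an increasing sequence $d_1\le d_2\le\dots$ of real numbers is obtained from the sequence $c_1^{\mathrm{EH}}(E)\le c_2^{\mathrm{EH}}(E)\le\dots$ by removing at most $N_0$ terms, and is also obtained from $c_1^{\mathrm{EH}}(E')\le c_2^{\mathrm{EH}}(E')\le\dots$ by removing at most $N_0$ terms. Then $E=E'$, i.e. $a_i=b_i$ for all $i$. (In other words, a bounded ellipsoid can be recovered uniquely from its Ekeland–Hofer sequence with at most $N_0$ terms removed.)
   Context: $E(a_1,\dots,a_n)=\{z\in\mathbb{C}^n:\sum_j|z_j|^2/a_j<1\}$. The Ekeland–Hofer capacities on ellipsoids are given as follows: writing the numbers $m\,a_i\pi$ ($m\in\mathbb{N}$, $1\le i\le n$) in increasing order with repetitions as $\delta_1\le \delta_2\le\dots$, one has $c_k^{\mathrm{EH}}(E(a_1,\dots,a_n))=\delta_k$. Removing terms means deleting entries (counted with multiplicity) from the sequence. *)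

theory Defs
  imports Complex_Main
begin

text \<open>Ellipsoid E(a_1,...,a_n) with parameters a :: nat => real, indices 1..n.
  The index set of the numbers m * a_i * pi with m >= 1 and 1 <= i <= n.\<close>
definition EH_index :: "nat \<Rightarrow> (nat \<times> nat) set" where
  "EH_index n = {(m, i). 1 \<le> m \<and> 1 \<le> i \<and> i \<le> n}"

definition is_EH_listing :: "nat \<Rightarrow> (nat \<Rightarrow> real) \<Rightarrow> (nat \<Rightarrow> real) \<Rightarrow> bool" where
  "is_EH_listing n a \<delta> \<longleftrightarrow>
     mono_on {1..} \<delta> \<and>
     (\<exists>\<beta>. bij_betw \<beta> {1..} (EH_index n) \<and>
        (\<forall>k\<ge>1. \<delta> k = real (fst (\<beta> k)) * a (snd (\<beta> k)) * pi))"

definition cEH :: "nat \<Rightarrow> (nat \<Rightarrow> real) \<Rightarrow> nat \<Rightarrow> real" where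
  "cEH n a = (SOME \<delta>. is_EH_listing n a \<delta>)"

definition obtained_by_removing_at_most ::
  "nat \<Rightarrow> (nat \<Rightarrow> real) \<Rightarrow> (nat \<Rightarrow> real) \<Rightarrow> bool" where
  "obtained_by_removing_at_most N \<delta> d \<longleftrightarrow>
     (\<exists>S \<sigma>. S \<subseteq> {1..} \<and> finite S \<and> card S \<le> N \<and>
        strict_mono_on {1..} \<sigma> \<and> \<sigma> ` {1..} = {1..} - S \<and>
        (\<forall>k\<ge>1. d k = \<delta> (\<sigma> k)))"

end

theory Submission
  imports Defs "HOL-Library.Multiset" "HOL-Library.Product_Lexorder" "HOL-Computational_Algebra.Primes"
begin

lemma enum_exists:
  fixes I :: "'a::linorder set" and v :: "'a \<Rightarrow> real"
  assumes inf: "infinite I" and fin: "\<And>t. finite {p\<in>I. v p \<le> t}"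
  shows "\<exists>\<beta>. bij_betw \<beta> {1::nat..} I \<and> mono_on {1..} (\<lambda>k. v (\<beta> k))"
proof -
  define pr where "pr p = {q\<in>I. (v q, q) < (v p, p)}" for p
  define rk where "rk p = card (pr p)" for p
  have finpr: "finite (pr p)" for p
    by (rule finite_subset[OF _ fin[of "v p"]]) (auto simp: pr_def less_prod_simp)
  have rkless: "rk q < rk p" if "q \<in> I" "(v q, q) < (v p, p)" for p q
  proof -
    have "pr q \<subset> pr p"
      using that by (auto simp: pr_def intro: less_trans)
    then show ?thesis unfolding rk_def by (simp add: finpr psubset_card_mono)
  qed
  have inj: "inj_on rk I"
  proof (rule inj_onI)
    fix p q assume "p \<in> I" "q \<in> I" "rk p = rk q"
    then show "p = q"
      using rkless[of p q] rkless[of q p]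
      by (metis less_prod_simp linorder_neqE order_less_irrefl order.refl)
  qed
  have img: "rk ` pr p = {..<rk p}" if "p \<in> I" for p
  proof (rule card_subset_eq)
    show "rk ` pr p \<subseteq> {..<rk p}" using rkless by (auto simp: pr_def)
    show "card (rk ` pr p) = card {..<rk p}"
      using inj card_image[of rk "pr p"] by (auto simp: rk_def pr_def intro: inj_on_subset)
  qed simp
  have surj: "rk ` I = UNIV"
  proof -
    { fix k
      have "infinite (rk ` I)" using inj inf finite_imageD by blast
      then have "\<not> rk ` I \<subseteq> {..k}" using finite_subset by blast
      then obtain p where p: "p \<in> I" "k < rk p" by (metis atMost_iff image_subset_iff not_le)
      then have "k \<in> rk ` pr p" using img by auto
      then have "k \<in> rk ` I" by (auto simp: pr_def) }
    then show ?thesis by auto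
  qed
  have bij1: "bij_betw rk I UNIV" using inj surj by (simp add: bij_betw_def)
  have bij2: "bij_betw (inv_into I rk) UNIV I" by (rule bij_betw_inv_into[OF bij1])
  have bij3: "bij_betw (\<lambda>k::nat. k - 1) {1..} UNIV"
  proof -
    have "inj_on (\<lambda>k::nat. k - 1) {1..}" by (rule inj_onI) auto
    moreover have "(\<lambda>k::nat. k - 1) ` {1..} = UNIV"
    proof -
      { fix j :: nat have "j = (j+1) - 1" "j + 1 \<in> {1..}" by auto
        then have "j \<in> (\<lambda>k::nat. k - 1) ` {1..}" by blast }
      then show ?thesis by auto
    qed
    ultimately show ?thesis by (simp add: bij_betw_def)
  qed
  define \<beta> where "\<beta> k = inv_into I rk (k - 1)" for k
  have beq: "\<beta> = (\<lambda>k. inv_into I rk (k - 1))" by (rule ext) (simp add: \<beta>_def)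
  have bij: "bij_betw \<beta> {1..} I"
    using bij_betw_trans[OF bij3 bij2] unfolding beq by (simp add: comp_def)
  have rkb: "rk (\<beta> k) = k - 1" for k
    unfolding \<beta>_def using surj by (simp add: f_inv_into_f)
  have bI: "\<beta> k \<in> I" for k
    unfolding \<beta>_def using surj by (simp add: inv_into_into)
  have "mono_on {1..} (\<lambda>k. v (\<beta> k))"
  proof (rule mono_onI)
    fix r s :: nat assume rs: "r \<in> {1..}" "s \<in> {1..}" "r \<le> s"
    show "v (\<beta> r) \<le> v (\<beta> s)"
    proof (rule ccontr)
      assume "\<not> ?thesis"
      then have "(v (\<beta> s), \<beta> s) < (v (\<beta> r), \<beta> r)" by (simp add: less_prod_simp)
      then have "rk (\<beta> s) < rk (\<beta> r)" using rkless bI by blast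
      then show False using rkb rs by auto
    qed
  qed
  then show ?thesis using bij by blast
qed


lemma listing_exists:
  assumes "n \<ge> 1" "\<forall>i\<in>{1..n}. 0 < a i"
  shows "is_EH_listing n a (cEH n a)"
proof -
  define v where "v p = real (fst p) * a (snd p) * pi" for p :: "nat \<times> nat"
  have inf: "infinite (EH_index n)"
  proof
    assume fin: "finite (EH_index n)"
    have "(\<lambda>m::nat. (m,1::nat)) ` {1..} \<subseteq> EH_index n" using assms(1) by (auto simp: EH_index_def)
    then have "finite ((\<lambda>m::nat. (m,1::nat)) ` {1..})" using fin finite_subset by blast
    moreover have "inj_on (\<lambda>m::nat. (m,1::nat)) {1..}" by (auto simp: inj_on_def)
    ultimately have "finite ({1..}::nat set)" using finite_imageD by blast
    then show False using infinite_Ici by blast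
  qed
  define c where "c = Min (a ` {1..n})"
  have cpos: "c > 0" using assms by (simp add: c_def)
  have cle: "c \<le> a i" if "i \<in> {1..n}" for i using that by (simp add: c_def)
  have fin: "finite {p\<in>EH_index n. v p \<le> t}" for t
  proof (rule finite_subset)
    show "{p\<in>EH_index n. v p \<le> t} \<subseteq> {..nat \<lceil>t / (c * pi)\<rceil>} \<times> {1..n}"
    proof
      fix p assume p: "p \<in> {p\<in>EH_index n. v p \<le> t}"
      obtain m i where mi: "p = (m, i)" by fastforce
      have i: "i \<in> {1..n}" "m \<ge> 1" using p mi by (auto simp: EH_index_def)
      have "real m * c * pi \<le> real m * a i * pi"
        using cle[OF i(1)] by (intro mult_right_mono mult_left_mono) auto
      also have "\<dots> \<le> t" using p mi by (simp add: v_def)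
      finally have "real m * (c * pi) \<le> t" by (simp add: mult.assoc)
      then have "real m \<le> t / (c * pi)" using cpos by (simp add: pos_le_divide_eq)
      also have "\<dots> \<le> of_int \<lceil>t / (c * pi)\<rceil>" by (rule le_of_int_ceiling)
      finally have "int m \<le> \<lceil>t / (c * pi)\<rceil>" by linarith
      then have "m \<le> nat \<lceil>t / (c * pi)\<rceil>" by linarith
      then show "p \<in> {..nat \<lceil>t / (c * pi)\<rceil>} \<times> {1..n}" using mi i by auto
    qed
  qed simp
  obtain \<beta> :: "nat \<Rightarrow> nat \<times> nat" where bij: "bij_betw \<beta> {1..} (EH_index n)" and mono: "mono_on {1..} (\<lambda>k. v (\<beta> k))"
    using enum_exists[OF inf fin] by blast
  have "is_EH_listing n a (\<lambda>k. v (\<beta> k))"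
    unfolding is_EH_listing_def using bij mono by (auto simp: v_def)
  then show ?thesis unfolding cEH_def by (rule someI[where P="is_EH_listing n a"])
qed

lemma tail_count:
  assumes "mono_on {1..} \<delta>" "obtained_by_removing_at_most N \<delta> d"
  shows "\<exists>T. \<forall>t>T. card {k. k \<ge> 1 \<and> d k = t} = card {j. j \<ge> 1 \<and> \<delta> j = t}"
proof -
  obtain S \<sigma> where S: "S \<subseteq> {1..}" "finite S" and sm: "strict_mono_on {1..} \<sigma>"
    and im: "\<sigma> ` {1..} = {1..} - S" and dk: "\<forall>k\<ge>1. d k = \<delta> (\<sigma> k)"
    using assms(2) unfolding obtained_by_removing_at_most_def by blast
  define T where "T = (if S = {} then 0 else \<delta> (Max S))"
  have "card {k. k \<ge> 1 \<and> d k = t} = card {j. j \<ge> 1 \<and> \<delta> j = t}" if t: "t > T" for t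
  proof (rule bij_betw_same_card)
    show "bij_betw \<sigma> {k. k \<ge> 1 \<and> d k = t} {j. j \<ge> 1 \<and> \<delta> j = t}"
      unfolding bij_betw_def
    proof
      show "inj_on \<sigma> {k. k \<ge> 1 \<and> d k = t}"
        using strict_mono_on_imp_inj_on[OF sm] by (rule inj_on_subset) auto
      show "\<sigma> ` {k. 1 \<le> k \<and> d k = t} = {j. 1 \<le> j \<and> \<delta> j = t}"
      proof
        show "\<sigma> ` {k. 1 \<le> k \<and> d k = t} \<subseteq> {j. 1 \<le> j \<and> \<delta> j = t}"
        proof
          fix j assume "j \<in> \<sigma> ` {k. 1 \<le> k \<and> d k = t}"
          then obtain k where k: "1 \<le> k" "d k = t" "j = \<sigma> k" by blast
          then have "\<sigma> k \<in> {1..} - S" using im by blast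
          then show "j \<in> {j. 1 \<le> j \<and> \<delta> j = t}" using dk k by simp
        qed
        show "{j. 1 \<le> j \<and> \<delta> j = t} \<subseteq> \<sigma> ` {k. 1 \<le> k \<and> d k = t}"
        proof
          fix j assume j: "j \<in> {j. 1 \<le> j \<and> \<delta> j = t}"
          have "j \<notin> S"
          proof
            assume jS: "j \<in> S"
            then have ne: "S \<noteq> {}" and jM: "j \<le> Max S" using S(2) by auto
            have "Max S \<in> {1..}" using Max_in[OF S(2) ne] S(1) by auto
            then have "\<delta> j \<le> \<delta> (Max S)" by (rule mono_onD[OF assms(1), rotated]) (use j jM in auto)
            then show False using t j ne by (simp add: T_def)
          qed
          then have "j \<in> \<sigma> ` {1..}" using im j by auto
          then obtain k where k: "k \<ge> 1" "j = \<sigma> k" by auto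
          then show "j \<in> \<sigma> ` {k. 1 \<le> k \<and> d k = t}" using dk j by auto
        qed
      qed
    qed
  qed
  then show ?thesis by blast
qed

lemma listing_count:
  assumes "is_EH_listing n a \<delta>" "\<forall>i\<in>{1..n}. 0 < a i"
  shows "card {k. k \<ge> 1 \<and> \<delta> k = t} = card {i\<in>{1..n}. \<exists>m\<ge>1. real m * a i * pi = t}"
proof -
  obtain \<beta> :: "nat \<Rightarrow> nat \<times> nat" where bij: "bij_betw \<beta> {1..} (EH_index n)"
    and dv: "\<forall>k\<ge>1. \<delta> k = real (fst (\<beta> k)) * a (snd (\<beta> k)) * pi"
    using assms(1) unfolding is_EH_listing_def by blast
  define Q where "Q = {p\<in>EH_index n. real (fst p) * a (snd p) * pi = t}"
  have "card {k. k \<ge> 1 \<and> \<delta> k = t} = card Q"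
  proof (rule bij_betw_same_card)
    show "bij_betw \<beta> {k. k \<ge> 1 \<and> \<delta> k = t} Q"
      unfolding bij_betw_def
    proof
      show "inj_on \<beta> {k. 1 \<le> k \<and> \<delta> k = t}"
        using bij_betw_imp_inj_on[OF bij] by (rule inj_on_subset) auto
      show "\<beta> ` {k. 1 \<le> k \<and> \<delta> k = t} = Q"
      proof
        show "\<beta> ` {k. 1 \<le> k \<and> \<delta> k = t} \<subseteq> Q"
          using bij_betw_imp_surj_on[OF bij] dv by (auto simp: Q_def)
        show "Q \<subseteq> \<beta> ` {k. 1 \<le> k \<and> \<delta> k = t}"
        proof
          fix p assume "p \<in> Q"
          then have p: "p \<in> EH_index n" "real (fst p) * a (snd p) * pi = t" by (auto simp: Q_def)
          then obtain k where k: "k \<in> {1..}" "p = \<beta> k"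
            using bij_betw_imp_surj_on[OF bij] by (metis imageE)
          then show "p \<in> \<beta> ` {k. 1 \<le> k \<and> \<delta> k = t}" using dv p by auto
        qed
      qed
    qed
  qed
  also have "card Q = card {i\<in>{1..n}. \<exists>m\<ge>1. real m * a i * pi = t}"
  proof (rule bij_betw_same_card)
    show "bij_betw snd Q {i\<in>{1..n}. \<exists>m\<ge>1. real m * a i * pi = t}"
      unfolding bij_betw_def
    proof
      show "inj_on snd Q"
      proof (rule inj_onI)
        fix p q assume pq: "p \<in> Q" "q \<in> Q" "snd p = snd q"
        then have "real (fst p) * a (snd p) * pi = real (fst q) * a (snd p) * pi" "a (snd p) > 0"
          using assms(2) by (auto simp: Q_def EH_index_def)
        then have "fst p = fst q" by simp
        then show "p = q" using pq(3) by (simp add: prod_eq_iff)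
      qed
      show "snd ` Q = {i \<in> {1..n}. \<exists>m\<ge>1. real m * a i * pi = t}"
      proof
        show "snd ` Q \<subseteq> {i \<in> {1..n}. \<exists>m\<ge>1. real m * a i * pi = t}"
          by (force simp: Q_def EH_index_def)
        show "{i \<in> {1..n}. \<exists>m\<ge>1. real m * a i * pi = t} \<subseteq> snd ` Q"
        proof
          fix i assume "i \<in> {i \<in> {1..n}. \<exists>m\<ge>1. real m * a i * pi = t}"
          then obtain m where "i \<in> {1..n}" "m \<ge> 1" "real m * a i * pi = t" by auto
          then have "(m,i) \<in> Q" by (auto simp: Q_def EH_index_def)
          then show "i \<in> snd ` Q" by (metis snd_conv image_eqI)
        qed
      qed
    qed
  qed
  finally show ?thesis .
qed

lemma avoid:
  fixes x T :: real and Y :: "real set"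
  assumes "x > 0" "finite Y" "\<forall>y\<in>Y. y > x"
  shows "\<exists>m::nat. prime m \<and> real m * x > T \<and> (\<forall>y\<in>Y. \<forall>k::nat. k \<ge> 1 \<longrightarrow> real k * y \<noteq> real m * x)"
proof -
  define Bad where "Bad y = {m::nat. prime m \<and> (\<exists>k::nat. k \<ge> 1 \<and> real k * y = real m * x)}" for y
  have sub: "m1 = m2" if y: "y \<in> Y" and m1: "m1 \<in> Bad y" and m2: "m2 \<in> Bad y" for y m1 m2
  proof -
    obtain k1 where k1: "k1 \<ge> 1" "real k1 * y = real m1 * x" "prime m1" using m1 by (auto simp: Bad_def)
    obtain k2 where k2: "k2 \<ge> 1" "real k2 * y = real m2 * x" "prime m2" using m2 by (auto simp: Bad_def)
    have "y > x" using y assms(3) by auto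
    have "real k1 * x < real k1 * y" using \<open>y > x\<close> k1(1) by simp
    then have "real k1 * x < real m1 * x" using k1 by simp
    then have "k1 < m1" using assms(1) by simp
    have "real (m1 * k2) * x = real (m2 * k1) * x"
    proof -
      have "real (m1 * k2) * x = real k2 * (real m1 * x)" by simp
      also have "\<dots> = real k2 * (real k1 * y)" using k1 by simp
      also have "\<dots> = real k1 * (real k2 * y)" by simp
      also have "\<dots> = real k1 * (real m2 * x)" using k2 by simp
      also have "\<dots> = real (m2 * k1) * x" by simp
      finally show ?thesis .
    qed
    then have "real (m1 * k2) = real (m2 * k1)" using assms(1) by simp
    then have "m1 * k2 = m2 * k1" by (simp only: of_nat_eq_iff)
    then have "m1 dvd m2 * k1" by (metis dvd_triv_left)
    then have "m1 dvd m2 \<or> m1 dvd k1" using k1(3) prime_dvd_mult_nat by blast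
    moreover have "\<not> m1 dvd k1" using \<open>k1 < m1\<close> k1(1) by (auto dest: dvd_imp_le)
    ultimately have "m1 dvd m2" by blast
    then show ?thesis using k1(3) k2(3) primes_dvd_imp_eq by blast
  qed
  have finB: "finite (Bad y)" if "y \<in> Y" for y
  proof (cases "Bad y = {}")
    case False
    then obtain m where "m \<in> Bad y" by auto
    then have "Bad y \<subseteq> {m}" using sub[OF that] by auto
    then show ?thesis using finite_subset by blast
  qed simp
  define F where "F = (\<Union>y\<in>Y. Bad y)"
  have finF: "finite F" using finB assms(2) by (auto simp: F_def)
  obtain m where m: "prime m" "m > Max (insert (nat \<lceil>T / x\<rceil>) F)" using bigger_prime by blast
  have mF: "m \<notin> F"
  proof
    assume "m \<in> F"
    then have "m \<le> Max (insert (nat \<lceil>T / x\<rceil>) F)" by (intro Max_ge) (use finF in auto)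
    then show False using m(2) by simp
  qed
  have "nat \<lceil>T / x\<rceil> \<le> Max (insert (nat \<lceil>T / x\<rceil>) F)" by (rule Max_ge) (use finF in auto)
  then have "nat \<lceil>T / x\<rceil> < m" using m(2) by (rule le_less_trans)
  then have "real (nat \<lceil>T / x\<rceil>) < real m" by (simp only: of_nat_less_iff)
  then have "T / x < real m" using real_nat_ceiling_ge[of "T / x"] by linarith
  then have "T < real m * x" using assms(1) by (simp add: divide_less_eq)
  moreover have "\<forall>y\<in>Y. \<forall>k::nat. k \<ge> 1 \<longrightarrow> real k * y \<noteq> real m * x"
  proof (intro ballI allI impI)
    fix y k assume "y \<in> Y" "(k::nat) \<ge> 1"
    show "real k * y \<noteq> real m * x"
    proof
      assume "real k * y = real m * x"
      then have "m \<in> Bad y" using m(1) \<open>k \<ge> 1\<close> by (auto simp: Bad_def)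
      then show False using mF \<open>y \<in> Y\<close> by (auto simp: F_def)
    qed
  qed
  ultimately show ?thesis using m(1) by blast
qed

theorem mainTheorem3:
  fixes N0 n :: nat and a b d :: "nat \<Rightarrow> real"
  assumes "n \<ge> 1"
    and "\<forall>i\<in>{1..n}. 0 < a i" and "\<forall>i\<in>{1..<n}. a i \<le> a (Suc i)"
    and "\<forall>i\<in>{1..n}. 0 < b i" and "\<forall>i\<in>{1..<n}. b i \<le> b (Suc i)"
    and "mono_on {1..} d"
    and "obtained_by_removing_at_most N0 (cEH n a) d"
    and "obtained_by_removing_at_most N0 (cEH n b) d"
  shows "\<forall>i\<in>{1..n}. a i = b i"
proof -
  have LA: "is_EH_listing n a (cEH n a)" using listing_exists assms(1,2) by blast
  have LB: "is_EH_listing n b (cEH n b)" using listing_exists assms(1,4) by blast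
  have mA: "mono_on {1..} (cEH n a)" using LA unfolding is_EH_listing_def by blast
  have mB: "mono_on {1..} (cEH n b)" using LB unfolding is_EH_listing_def by blast
  obtain T1 where T1: "\<forall>t>T1. card {k. k \<ge> 1 \<and> d k = t} = card {j. j \<ge> 1 \<and> cEH n a j = t}"
    using tail_count[OF mA assms(7)] by blast
  obtain T2 where T2: "\<forall>t>T2. card {k. k \<ge> 1 \<and> d k = t} = card {j. j \<ge> 1 \<and> cEH n b j = t}"
    using tail_count[OF mB assms(8)] by blast
  define cnt where "cnt c t = card {i\<in>{1..n}. \<exists>m\<ge>1. real m * c i * pi = t}" for c :: "nat \<Rightarrow> real" and t
  have eqc: "cnt a t = cnt b t" if "t > max T1 T2" for t
  proof -
    have "cnt a t = card {j. j \<ge> 1 \<and> cEH n a j = t}"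
      using listing_count[OF LA assms(2)] by (simp add: cnt_def)
    also have "\<dots> = card {k. k \<ge> 1 \<and> d k = t}" using T1 that by simp
    also have "\<dots> = card {j. j \<ge> 1 \<and> cEH n b j = t}" using T2 that by simp
    also have "\<dots> = cnt b t"
      using listing_count[OF LB assms(4)] by (simp add: cnt_def)
    finally show ?thesis .
  qed
  define xsA where "xsA = map a [1..<Suc n]"
  define xsB where "xsB = map b [1..<Suc n]"
  define A where "A = mset xsA"
  define B where "B = mset xsB"
  have Aimg: "A = image_mset a (mset_set {1..n})"
    unfolding A_def xsA_def mset_map mset_upt atLeastLessThanSuc_atLeastAtMost ..
  have Bimg: "B = image_mset b (mset_set {1..n})"
    unfolding B_def xsB_def mset_map mset_upt atLeastLessThanSuc_atLeastAtMost ..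
  have sizeA: "size (filter_mset P A) = card {i\<in>{1..n}. P (a i)}" for P
    by (simp add: Aimg filter_mset_image_mset filter_mset_mset_set)
  have sizeB: "size (filter_mset P B) = card {i\<in>{1..n}. P (b i)}" for P
    by (simp add: Bimg filter_mset_image_mset filter_mset_mset_set)
  have posA: "y > 0" if "y \<in># A" for y using that assms(2) by (auto simp: Aimg)
  have posB: "y > 0" if "y \<in># B" for y using that assms(4) by (auto simp: Bimg)
  have AB: "A = B"
  proof (rule ccontr)
    assume AB: "A \<noteq> B"
    define D where "D = {y. count A y \<noteq> count B y}"
    have "D \<subseteq> set_mset A \<union> set_mset B"
      by (auto simp: D_def not_in_iff)
    then have finD: "finite D" by (rule finite_subset) simp
    have "D \<noteq> {}" using AB multiset_eqI[of A B] unfolding D_def by blast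
    define x where "x = Min D"
    have xD: "x \<in> D" using finD \<open>D \<noteq> {}\<close> by (simp add: x_def)
    have below: "count A y = count B y" if "y < x" for y
    proof (rule ccontr)
      assume "count A y \<noteq> count B y"
      then have "y \<in> D" by (simp add: D_def)
      then have "x \<le> y" using finD by (simp add: x_def)
      then show False using that by simp
    qed
    have "x \<in># A \<or> x \<in># B" using xD by (auto simp: D_def not_in_iff)
    then have xpos: "x > 0" using posA posB by blast
    define Y where "Y = {y\<in>set_mset A \<union> set_mset B. y > x}"
    have finY: "finite Y" by (simp add: Y_def)
    obtain m :: nat where m: "prime m" "real m * x > max T1 T2 / pi"
      "\<forall>y\<in>Y. \<forall>k::nat. k \<ge> 1 \<longrightarrow> real k * y \<noteq> real m * x"
      using avoid[OF xpos finY, of "max T1 T2 / pi"] by (auto simp: Y_def)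
    define t where "t = real m * x * pi"
    have "max T1 T2 / pi * pi < real m * x * pi"
      using m(2) pi_gt_zero by (rule mult_strict_right_mono)
    then have tgt: "t > max T1 T2" by (simp add: t_def)
    define P where "P y = (\<exists>k::nat\<ge>1. real k * y * pi = t)" for y
    have Px: "P x" unfolding P_def t_def using prime_ge_2_nat[OF m(1)] by (intro exI[of _ m]) auto
    have Pbig: "\<not> P y" if "y \<in> Y" for y
    proof
      assume "P y"
      then obtain k :: nat where k: "k \<ge> 1" "real k * y * pi = real m * x * pi"
        by (auto simp: P_def t_def)
      then have "real k * y = real m * x" by simp
      then show False using m(3) that k(1) by blast
    qed
    have split: "filter_mset P M = filter_mset (\<lambda>y. y < x \<and> P y) M + filter_mset (\<lambda>y. y = x) M"
      if M: "\<forall>y\<in>#M. y \<in> set_mset A \<union> set_mset B" for M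
    proof (rule multiset_eqI)
      fix y
      show "count (filter_mset P M) y = count (filter_mset (\<lambda>y. y < x \<and> P y) M + filter_mset (\<lambda>y. y = x) M) y"
      proof (cases "y \<in># M")
        case False
        then have "count M y = 0" by (simp add: not_in_iff)
        then show ?thesis by auto
      next
        case True
        then have "y \<in> set_mset A \<union> set_mset B" using M by blast
        moreover consider "y < x" | "y = x" | "y > x" by linarith
        ultimately show ?thesis using Px Pbig[of y] by cases (auto simp: Y_def)
      qed
    qed
    have lowEq: "filter_mset (\<lambda>y. y < x \<and> P y) A = filter_mset (\<lambda>y. y < x \<and> P y) B"
      by (rule multiset_eqI) (simp add: below)
    have "cnt a t = size (filter_mset P A)" by (simp add: cnt_def sizeA P_def)
    also have "\<dots> = size (filter_mset (\<lambda>y. y < x \<and> P y) A) + count A x"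
      by (subst split) (auto simp: filter_eq_replicate_mset)
    finally have cA: "cnt a t = size (filter_mset (\<lambda>y. y < x \<and> P y) A) + count A x" .
    have "cnt b t = size (filter_mset P B)" by (simp add: cnt_def sizeB P_def)
    also have "\<dots> = size (filter_mset (\<lambda>y. y < x \<and> P y) B) + count B x"
      by (subst split) (auto simp: filter_eq_replicate_mset)
    finally have cB: "cnt b t = size (filter_mset (\<lambda>y. y < x \<and> P y) B) + count B x" .
    have "count A x = count B x" using cA cB lowEq eqc[OF tgt] by simp
    then show False using xD by (simp add: D_def)
  qed
  have monoA: "a i \<le> a j" if "1 \<le> i" "i \<le> j" "j \<le> n" for i j
    using that
  proof (induction j)
    case 0 then show ?case by simp
  next
    case (Suc j)
    show ?case
    proof (cases "i = Suc j")
      case False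
      then have "a i \<le> a j" using Suc by simp
      moreover have "a j \<le> a (Suc j)" using assms(3) Suc.prems False by auto
      ultimately show ?thesis by simp
    qed simp
  qed
  have monoB: "b i \<le> b j" if "1 \<le> i" "i \<le> j" "j \<le> n" for i j
    using that
  proof (induction j)
    case 0 then show ?case by simp
  next
    case (Suc j)
    show ?case
    proof (cases "i = Suc j")
      case False
      then have "b i \<le> b j" using Suc by simp
      moreover have "b j \<le> b (Suc j)" using assms(5) Suc.prems False by auto
      ultimately show ?thesis by simp
    qed simp
  qed
  have sA: "sorted xsA" unfolding sorted_iff_nth_mono xsA_def
    by (auto simp del: upt_Suc intro!: monoA)
  have sB: "sorted xsB" unfolding sorted_iff_nth_mono xsB_def
    by (auto simp del: upt_Suc intro!: monoB)
  have "sort xsB = xsA" using properties_for_sort[of xsA xsB] AB sA by (simp add: A_def B_def)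
  moreover have "sort xsB = xsB" using sB by (simp add: sorted_sort_id)
  ultimately have xs: "xsA = xsB" by simp
  show ?thesis
  proof
    fix i assume i: "i \<in> {1..n}"
    have "a i = xsA ! (i - 1)" using i by (auto simp del: upt_Suc simp add: xsA_def)
    also have "\<dots> = xsB ! (i - 1)" using xs by simp
    also have "\<dots> = b i" using i by (auto simp del: upt_Suc simp add: xsB_def)
    finally show "a i = b i" .
  qed
qed

end
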